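(* Let $n \ge k \ge 1$ be integers and let $G$ be the digraph whose vertex set is $C = \{x \in \mathbb{Z}^k : x_i \ge 1 \text{ for all } i,\ \sum_{i=1}^k x_i = n\}$, with a directed edge from $x$ to $y$ whenever $y = x + \delta_i$ for some $i \in \{1,\dots,k\}$. Then $G$ is self-converse, i.e. $G$ is isomorphic to the digraph obtained from $G$ by reversing the direction of every edge.
   Context: For $i \in \{1,\dots,k\}$, $\delta_i \in \mathbb{Z}^k$ is the vector with entry $1$ in position $i$, entry $-1$ in position $i+1$ (taken mod $k$, so $\delta_k$ has $1$ in position $k$ and $-1$ in position $1$), and $0$ elsewhere. (Vertices of $G$ are the unblocked configurations of $k$ workers on a circle of $n$ bins, $x_i$ being the distance from worker $i$ to worker $i+1$; an edge $x \to x+\delta_i$ corresponds to worker $i+1$ advancing one bin by a single Bernoulli failure.) Two digraphs are isomorphic if there is a bijection between vertex sets such that $(u,v)$ is an edge of the first iff the image pair is an edge of the second. *)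

theory Defs
  imports Main
begin

(* Vectors in Z^k are represented as functions nat => int, with coordinates
   indexed 0..k-1 (coordinate i here = coordinate i+1 in the paper) and
   value 0 outside {0..<k}. *)

definition config_set :: "nat \<Rightarrow> nat \<Rightarrow> (nat \<Rightarrow> int) set" where
  "config_set n k = {x. (\<forall>i<k. x i \<ge> 1) \<and> (\<forall>i\<ge>k. x i = 0)
                         \<and> (\<Sum>i<k. x i) = int n}"

definition delta :: "nat \<Rightarrow> nat \<Rightarrow> (nat \<Rightarrow> int)" where
  "delta k i = (\<lambda>j. (if j = i then 1 else 0) - (if j = (i + 1) mod k then 1 else 0))"

definition G_edge :: "nat \<Rightarrow> nat \<Rightarrow> (nat \<Rightarrow> int) \<Rightarrow> (nat \<Rightarrow> int) \<Rightarrow> bool" where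
  "G_edge n k x y \<longleftrightarrow> x \<in> config_set n k \<and> y \<in> config_set n k \<and>
     (\<exists>i<k. y = (\<lambda>j. x j + delta k i j))"

definition digraph_iso :: "'a set \<Rightarrow> ('a \<Rightarrow> 'a \<Rightarrow> bool) \<Rightarrow> 'b set \<Rightarrow> ('b \<Rightarrow> 'b \<Rightarrow> bool) \<Rightarrow> bool" where
  "digraph_iso V E W F \<longleftrightarrow> (\<exists>f. bij_betw f V W \<and>
      (\<forall>u\<in>V. \<forall>v\<in>V. E u v \<longleftrightarrow> F (f u) (f v)))"

end

theory Submission
  imports Defs
begin

definition rf :: "nat \<Rightarrow> (nat \<Rightarrow> int) \<Rightarrow> (nat \<Rightarrow> int)" where
  "rf k x = (\<lambda>j. if j < k then x (k - 1 - j) else 0)"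

lemma rf_config: "x \<in> config_set n k \<Longrightarrow> rf k x \<in> config_set n k"
proof -
  assume x: "x \<in> config_set n k"
  have "(\<Sum>j<k. rf k x j) = (\<Sum>j<k. x (k - 1 - j))" by (simp add: rf_def)
  also have "\<dots> = (\<Sum>j<k. x j)"
    by (rule sum.reindex_bij_witness[where i="\<lambda>j. k - 1 - j" and j="\<lambda>j. k - 1 - j"]) auto
  finally show ?thesis using x unfolding config_set_def rf_def by auto
qed

lemma rf_rf: "x \<in> config_set n k \<Longrightarrow> rf k (rf k x) = x"
proof
  fix j assume x: "x \<in> config_set n k"
  show "rf k (rf k x) j = x j"
  proof (cases "j < k")
    case True
    then have "k - 1 - (k - 1 - j) = j" "k - 1 - j < k" by auto
    then show ?thesis using True by (simp add: rf_def)
  next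
    case False
    then show ?thesis using x by (simp add: rf_def config_set_def)
  qed
qed

lemma delta_ref:
  assumes "i < k" "j < k"
  shows "delta k (if i = k - 1 then k - 1 else k - 2 - i) j = - delta k i (k - 1 - j)"
proof (cases "i = k - 1")
  case True
  have m: "(k - 1 + 1) mod k = 0" using assms by simp
  have e1: "(j = k - 1) = (k - 1 - j = 0)" "(j = 0) = (k - 1 - j = k - 1)" using assms by arith+
  show ?thesis unfolding delta_def using True m e1 by simp
next
  case False
  then have m1: "(i + 1) mod k = i + 1" "(k - 2 - i + 1) mod k = k - 1 - i" using assms by auto
  have e1: "(j = k - 2 - i) = (k - 1 - j = i + 1)" "(j = k - 1 - i) = (k - 1 - j = i)"
    using assms False by arith+
  have L: "delta k (if i = k - 1 then k - 1 else k - 2 - i) j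
      = (if k - 1 - j = i + 1 then 1 else 0) - (if k - 1 - j = i then 1 else 0)"
    unfolding delta_def by (simp only: False if_False m1 e1)
  have R: "delta k i (k - 1 - j) = (if k - 1 - j = i then 1 else 0) - (if k - 1 - j = i + 1 then 1 else 0)"
    unfolding delta_def by (simp only: m1)
  show ?thesis unfolding L R by simp
qed

lemma edge_rev:
  assumes "G_edge n k x y"
  shows "G_edge n k (rf k y) (rf k x)"
proof -
  from assms have x: "x \<in> config_set n k" and y: "y \<in> config_set n k"
    and "\<exists>i<k. y = (\<lambda>j. x j + delta k i j)" unfolding G_edge_def by auto
  then obtain i where i: "i < k" and yd: "y = (\<lambda>j. x j + delta k i j)" by blast
  define i' where "i' = (if i = k - 1 then k - 1 else k - 2 - i)"
  have i': "i' < k" using i unfolding i'_def by auto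
  have d0: "delta k i' j = 0" if "j \<ge> k" for j
  proof -
    have "(i' + 1) mod k < k" using i' by simp
    then have "j \<noteq> (i' + 1) mod k" "j \<noteq> i'" using that i' by linarith+
    then show ?thesis unfolding delta_def by simp
  qed
  have "rf k x = (\<lambda>j. rf k y j + delta k i' j)"
  proof
    fix j
    show "rf k x j = rf k y j + delta k i' j"
    proof (cases "j < k")
      case True
      then show ?thesis using delta_ref[OF i True] unfolding i'_def rf_def yd by simp
    next
      case False
      then show ?thesis using d0 unfolding rf_def by simp
    qed
  qed
  then show ?thesis unfolding G_edge_def using rf_config[OF x] rf_config[OF y] i' by blast
qed

theorem lemma2:
  fixes n k :: nat
  assumes "1 \<le> k" and "k \<le> n"
  shows "digraph_iso (config_set n k) (G_edge n k)
                     (config_set n k) (\<lambda>u v. G_edge n k v u)"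
  unfolding digraph_iso_def
proof (intro exI conjI ballI)
  show "bij_betw (rf k) (config_set n k) (config_set n k)"
    by (rule bij_betw_byWitness[where f'="rf k"]) (auto simp: rf_rf rf_config)
next
  fix u v assume u: "u \<in> config_set n k" and v: "v \<in> config_set n k"
  show "G_edge n k u v = G_edge n k (rf k v) (rf k u)"
    using edge_rev[of n k u v] edge_rev[of n k "rf k v" "rf k u"] rf_rf[OF u] rf_rf[OF v] by auto
qed

end
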